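(* Suppose that $(L_1,<_1),\ldots,(L_n,<_n)$ are linear orders each with at least two elements, and let $<$ be the product order on $L_1\times\cdots\times L_n$. If $\prec_1,\ldots,\prec_n$ are linear orders on $L_1\times\cdots\times L_n$ which realize $<$ (i.e. $<\;=\;\prec_1\cap\cdots\cap\prec_n$), then there is a permutation $\sigma\in S_n$ such that for all $i\leq n$ and all $\mathbf{a},\mathbf{b}\in L_1\times\cdots\times L_n$, $a_i<_ib_i$ implies $\mathbf{a}\prec_{\sigma(i)}\mathbf{b}$.
   Context: The product order: $\mathbf{a}<\mathbf{b}$ iff $a_i\leq_i b_i$ for all $i$ and $\mathbf{a}\neq\mathbf{b}$. $S_n$ is the group of permutations of $\{1,\ldots,n\}$. *)

theory Defs
  imports "HOL-Combinatorics.Permutations" "HOL-Library.FuncSet"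
begin

definition strict_linear_on :: "'a set \<Rightarrow> ('a \<Rightarrow> 'a \<Rightarrow> bool) \<Rightarrow> bool" where
  "strict_linear_on A r \<longleftrightarrow>
     (\<forall>x\<in>A. \<not> r x x) \<and>
     (\<forall>x\<in>A. \<forall>y\<in>A. \<forall>z\<in>A. r x y \<longrightarrow> r y z \<longrightarrow> r x z) \<and>
     (\<forall>x\<in>A. \<forall>y\<in>A. x \<noteq> y \<longrightarrow> r x y \<or> r y x)"

text \<open>Product L_0 x ... x L_(n-1), tuples as extensional functions on {0..<n}.\<close>
definition prod_carrier :: "nat \<Rightarrow> (nat \<Rightarrow> 'a set) \<Rightarrow> (nat \<Rightarrow> 'a) set" where
  "prod_carrier n L = PiE {0..<n} L"

definition prod_less :: "nat \<Rightarrow> (nat \<Rightarrow> 'a \<Rightarrow> 'a \<Rightarrow> bool) \<Rightarrow> (nat \<Rightarrow> 'a) \<Rightarrow> (nat \<Rightarrow> 'a) \<Rightarrow> bool" where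
  "prod_less n lt a b \<longleftrightarrow> (\<forall>i<n. lt i (a i) (b i) \<or> a i = b i) \<and> a \<noteq> b"

end

theory Submission
  imports Defs
begin

locale L63 =
  fixes n :: nat
    and L :: "nat \<Rightarrow> 'a set"
    and lt :: "nat \<Rightarrow> 'a \<Rightarrow> 'a \<Rightarrow> bool"
    and prec :: "nat \<Rightarrow> (nat \<Rightarrow> 'a) \<Rightarrow> (nat \<Rightarrow> 'a) \<Rightarrow> bool"
  assumes lin: "\<And>i. i < n \<Longrightarrow> strict_linear_on (L i) (lt i)"
    and two: "\<And>i. i < n \<Longrightarrow> \<exists>x\<in>L i. \<exists>y\<in>L i. x \<noteq> y"
    and prec_lin: "\<And>j. j < n \<Longrightarrow> strict_linear_on (prod_carrier n L) (prec j)"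
    and realize: "\<And>a b. a \<in> prod_carrier n L \<Longrightarrow> b \<in> prod_carrier n L \<Longrightarrow>
                    prod_less n lt a b \<longleftrightarrow> (\<forall>j<n. prec j a b)"
begin

abbreviation C where "C \<equiv> prod_carrier n L"

lemma lt_irr: "i < n \<Longrightarrow> x \<in> L i \<Longrightarrow> \<not> lt i x x"
  using lin unfolding strict_linear_on_def by blast
lemma lt_trans: "i < n \<Longrightarrow> x \<in> L i \<Longrightarrow> y \<in> L i \<Longrightarrow> z \<in> L i \<Longrightarrow> lt i x y \<Longrightarrow> lt i y z \<Longrightarrow> lt i x z"
  using lin unfolding strict_linear_on_def by blast
lemma lt_tot: "i < n \<Longrightarrow> x \<in> L i \<Longrightarrow> y \<in> L i \<Longrightarrow> x \<noteq> y \<Longrightarrow> lt i x y \<or> lt i y x"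
  using lin unfolding strict_linear_on_def by blast
lemma pr_irr: "j < n \<Longrightarrow> x \<in> C \<Longrightarrow> \<not> prec j x x"
  using prec_lin unfolding strict_linear_on_def by blast
lemma pr_trans: "j < n \<Longrightarrow> x \<in> C \<Longrightarrow> y \<in> C \<Longrightarrow> z \<in> C \<Longrightarrow> prec j x y \<Longrightarrow> prec j y z \<Longrightarrow> prec j x z"
  using prec_lin unfolding strict_linear_on_def by blast
lemma pr_tot: "j < n \<Longrightarrow> x \<in> C \<Longrightarrow> y \<in> C \<Longrightarrow> x \<noteq> y \<Longrightarrow> prec j x y \<or> prec j y x"
  using prec_lin unfolding strict_linear_on_def by blast

definition le where "le i x y \<longleftrightarrow> lt i x y \<or> x = y"

lemma le_trans: "i < n \<Longrightarrow> x \<in> L i \<Longrightarrow> y \<in> L i \<Longrightarrow> z \<in> L i \<Longrightarrow> le i x y \<Longrightarrow> le i y z \<Longrightarrow> le i x z"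
  unfolding le_def using lt_trans by blast

lemma le_lt_trans: "i < n \<Longrightarrow> x \<in> L i \<Longrightarrow> y \<in> L i \<Longrightarrow> z \<in> L i \<Longrightarrow> le i x y \<Longrightarrow> lt i y z \<Longrightarrow> lt i x z"
  unfolding le_def using lt_trans by blast

lemma lt_le_trans: "i < n \<Longrightarrow> x \<in> L i \<Longrightarrow> y \<in> L i \<Longrightarrow> z \<in> L i \<Longrightarrow> lt i x y \<Longrightarrow> le i y z \<Longrightarrow> lt i x z"
  unfolding le_def using lt_trans by blast

definition ple where "ple x y \<longleftrightarrow> (\<forall>i<n. le i (x i) (y i))"

lemma ple_prec: "x \<in> C \<Longrightarrow> y \<in> C \<Longrightarrow> ple x y \<Longrightarrow> j < n \<Longrightarrow> prec j x y \<or> x = y"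
  using realize[of x y] unfolding ple_def le_def prod_less_def by blast

lemma chain: "j < n \<Longrightarrow> x \<in> C \<Longrightarrow> y \<in> C \<Longrightarrow> z \<in> C \<Longrightarrow> w \<in> C \<Longrightarrow>
   ple x y \<Longrightarrow> prec j y z \<Longrightarrow> ple z w \<Longrightarrow> prec j x w"
  using ple_prec[of x y j] ple_prec[of z w j] pr_trans[of j] by metis

definition std where "std c d \<longleftrightarrow> (\<forall>k<n. c k \<in> L k \<and> d k \<in> L k \<and> lt k (c k) (d k))"

definition Bv where "Bv c d k = (\<lambda>l. if l < n then (if l = k then c l else d l) else undefined)"
definition Av where "Av c d k = (\<lambda>l. if l < n then (if l = k then d l else c l) else undefined)"
definition rv where "rv c d k j \<longleftrightarrow> prec j (Bv c d k) (Av c d k)"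

lemma Bv_C: "std c d \<Longrightarrow> Bv c d k \<in> C"
  unfolding std_def Bv_def prod_carrier_def PiE_def Pi_def extensional_def by auto
lemma Av_C: "std c d \<Longrightarrow> Av c d k \<in> C"
  unfolding std_def Av_def prod_carrier_def PiE_def Pi_def extensional_def by auto

lemma R1: assumes "std c d" "k < n" shows "\<exists>j<n. rv c d k j"
proof -
  have s: "c k \<in> L k" "d k \<in> L k" "lt k (c k) (d k)" using assms unfolding std_def by auto
  have ne: "Av c d k \<noteq> Bv c d k"
  proof
    assume "Av c d k = Bv c d k"
    then have "Av c d k k = Bv c d k k" by simp
    then have "d k = c k" using assms(2) unfolding Av_def Bv_def by simp
    then show False using s lt_irr[OF assms(2)] by metis
  qed
  have "\<not> prod_less n lt (Av c d k) (Bv c d k)"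
  proof
    assume "prod_less n lt (Av c d k) (Bv c d k)"
    then have "lt k (d k) (c k) \<or> d k = c k" using assms(2) unfolding prod_less_def Av_def Bv_def
      by force
    then show False using s lt_irr[OF assms(2)] lt_trans[OF assms(2)] by metis
  qed
  then obtain j where j: "j < n" "\<not> prec j (Av c d k) (Bv c d k)"
    using realize[OF Av_C[OF assms(1)] Bv_C[OF assms(1)]] by blast
  then have "prec j (Bv c d k) (Av c d k)"
    using pr_tot[OF j(1) Av_C[OF assms(1)] Bv_C[OF assms(1)] ne] by blast
  then show ?thesis using j unfolding rv_def by blast
qed

lemma R2: assumes "std c d" "k < n" "k' < n" "j < n" "rv c d k j" "rv c d k' j" shows "k = k'"
proof (rule ccontr)
  assume kk: "k \<noteq> k'"
  have p1: "ple (Av c d k) (Bv c d k')" "ple (Av c d k') (Bv c d k)"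
    using assms(1) kk unfolding ple_def Av_def Bv_def std_def le_def by auto
  note C1 = Bv_C[OF assms(1), of k] Av_C[OF assms(1), of k] Bv_C[OF assms(1), of k'] Av_C[OF assms(1), of k']
  have h1: "prec j (Bv c d k) (Av c d k)" "prec j (Bv c d k') (Av c d k')" using assms(5,6) unfolding rv_def by auto
  have h2: "prec j (Av c d k) (Bv c d k') \<or> Av c d k = Bv c d k'"
    using ple_prec[OF C1(2) C1(3) p1(1) assms(4)] .
  have h3: "prec j (Bv c d k) (Bv c d k')"
    using h2 h1(1) pr_trans[OF assms(4) C1(1) C1(2) C1(3)] by auto
  have h4: "prec j (Bv c d k) (Av c d k')"
    using pr_trans[OF assms(4) C1(1) C1(3) C1(4) h3 h1(2)] .
  have h5: "prec j (Av c d k') (Bv c d k) \<or> Av c d k' = Bv c d k"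
    using ple_prec[OF C1(4) C1(1) p1(2) assms(4)] .
  have "prec j (Bv c d k) (Bv c d k)"
    using h5 h4 pr_trans[OF assms(4) C1(1) C1(4) C1(1)] by auto
  then show False using pr_irr[OF assms(4) Bv_C[OF assms(1)]] by blast
qed

definition tf where "tf c d k = (SOME j. j < n \<and> rv c d k j)"

lemma tf: "std c d \<Longrightarrow> k < n \<Longrightarrow> tf c d k < n \<and> rv c d k (tf c d k)"
  unfolding tf_def using R1 by (metis (no_types, lifting) someI_ex)

lemma tf_inj: "std c d \<Longrightarrow> inj_on (tf c d) {0..<n}"
  unfolding inj_on_def using tf R2 by (metis atLeastLessThan_iff)

lemma tf_img: "std c d \<Longrightarrow> tf c d ` {0..<n} = {0..<n}"
  apply (rule endo_inj_surj)
  using tf tf_inj by auto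

lemma R3: assumes "std c d" "j < n" shows "\<exists>k<n. rv c d k j"
proof -
  have "j \<in> tf c d ` {0..<n}" using tf_img[OF assms(1)] assms(2) by auto
  then show ?thesis using tf[OF assms(1)] by auto
qed

lemma Runiq: assumes "std c d" "k < n" "j < n" "j' < n" "rv c d k j" "rv c d k j'" shows "j = j'"
proof -
  obtain k1 where k1: "k1 < n" "rv c d k1 j" using R3 assms by blast
  have "k1 = k" using R2 assms k1 by blast
  obtain k2 where k2: "k2 < n" "rv c d k2 j'" using R3 assms by blast
  have "k2 = k" using R2 assms k2 by blast
  have "j \<in> tf c d ` {0..<n}" "j' \<in> tf c d ` {0..<n}" using tf_img[OF assms(1)] assms by auto
  then obtain m1 m2 where m: "m1 < n" "j = tf c d m1" "m2 < n" "j' = tf c d m2" by auto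
  have "m1 = k" using R2[OF assms(1) m(1) assms(2) assms(3)] tf[OF assms(1) m(1)] m(2) assms(5) by simp
  moreover have "m2 = k" using R2[OF assms(1) m(3) assms(2) assms(4)] tf[OF assms(1) m(3)] m(4) assms(6) by simp
  ultimately show ?thesis using m by simp
qed

lemma Comp: assumes "std c d" "std c' d'" "k < n" "j < n"
  "ple (Bv c d k) (Bv c' d' k)" "ple (Av c' d' k) (Av c d k)"
  shows "rv c' d' k j \<longleftrightarrow> rv c d k j"
proof -
  have fw: "rv c d k j2" if "rv c' d' k j2" "j2 < n" for j2
    using chain[OF that(2) Bv_C[OF assms(1)] Bv_C[OF assms(2)] Av_C[OF assms(2)] Av_C[OF assms(1)]
      assms(5) _ assms(6)] that(1) unfolding rv_def by blast
  show ?thesis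
  proof
    assume "rv c' d' k j" then show "rv c d k j" using fw assms by blast
  next
    assume h: "rv c d k j"
    obtain j2 where "j2 < n" "rv c' d' k j2" using R1 assms by blast
    moreover then have "j2 = j" using fw Runiq[OF assms(1) assms(3) _ assms(4) _ h] by blast
    ultimately show "rv c' d' k j" by simp
  qed
qed

lemma Trick1: assumes "std c d" "std c' d'" "m < n" "j < n"
  "\<And>k j. k < n \<Longrightarrow> k \<noteq> m \<Longrightarrow> j < n \<Longrightarrow> rv c d k j \<longleftrightarrow> rv c' d' k j"
  "rv c d m j" shows "rv c' d' m j"
proof -
  obtain k where k: "k < n" "rv c' d' k j" using R3[OF assms(2) assms(4)] by blast
  show ?thesis
  proof (cases "k = m")
    case True then show ?thesis using k by simp
  next
    case False
    then have "rv c d k j" using assms(5)[OF k(1) False assms(4)] k by blast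
    then have "k = m" using R2[OF assms(1) k(1) assms(3) assms(4) _ assms(6)] by blast
    then show ?thesis using False by simp
  qed
qed

lemma Widen: assumes "std c d" "std c' d'" "m < n" "j < n"
  "\<And>l. l < n \<Longrightarrow> l \<noteq> m \<Longrightarrow> c' l = c l \<and> d' l = d l"
  "le m (c' m) (c m)" "le m (d m) (d' m)"
  shows "rv c d m j \<longleftrightarrow> rv c' d' m j"
proof -
  have oth: "rv c d k j2 \<longleftrightarrow> rv c' d' k j2" if "k < n" "k \<noteq> m" "j2 < n" for k j2
  proof -
    have "ple (Bv c d k) (Bv c' d' k)" "ple (Av c' d' k) (Av c d k)"
      unfolding ple_def Bv_def Av_def
    proof (safe)
      fix i assume "i < n"
      then show "le i (if i < n then if i = k then c i else d i else undefined)
                 (if i < n then if i = k then c' i else d' i else undefined)"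
        using assms(5,6,7) that unfolding le_def by (cases "i = m") auto
    next
      fix i assume "i < n"
      then show "le i (if i < n then if i = k then d' i else c' i else undefined)
                 (if i < n then if i = k then d i else c i else undefined)"
        using assms(5,6,7) that unfolding le_def by (cases "i = m") auto
    qed
    then show ?thesis using Comp[OF assms(1,2) that(1,3)] by blast
  qed
  show ?thesis
    using Trick1[OF assms(1,2,3,4) oth] Trick1[OF assms(2,1,3,4)] oth by blast
qed

definition mn where "mn i x y = (if lt i x y then x else y)"
definition mx where "mx i x y = (if lt i x y then y else x)"

lemma mn: "i < n \<Longrightarrow> x \<in> L i \<Longrightarrow> y \<in> L i \<Longrightarrow> mn i x y \<in> L i \<and> le i (mn i x y) x \<and> le i (mn i x y) y"
  unfolding mn_def le_def using lt_tot by auto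
lemma mx: "i < n \<Longrightarrow> x \<in> L i \<Longrightarrow> y \<in> L i \<Longrightarrow> mx i x y \<in> L i \<and> le i x (mx i x y) \<and> le i y (mx i x y)"
  unfolding mx_def le_def using lt_tot by auto


lemma main: "\<exists>\<sigma>. \<sigma> permutes {0..<n} \<and>
           (\<forall>i<n. \<forall>a\<in>prod_carrier n L. \<forall>b\<in>prod_carrier n L.
              lt i (a i) (b i) \<longrightarrow> prec (\<sigma> i) a b)"
proof -
  have ex: "\<forall>k. \<exists>p. k < n \<longrightarrow> fst p \<in> L k \<and> snd p \<in> L k \<and> lt k (fst p) (snd p)"
  proof
    fix k show "\<exists>p. k < n \<longrightarrow> fst p \<in> L k \<and> snd p \<in> L k \<and> lt k (fst p) (snd p)"
    proof (cases "k < n")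
      case True
      then obtain x y where "x \<in> L k" "y \<in> L k" "x \<noteq> y" using two by blast
      then have "lt k x y \<or> lt k y x" using lt_tot[OF True] by blast
      then show ?thesis
      proof
        assume "lt k x y" then show ?thesis using \<open>x \<in> L k\<close> \<open>y \<in> L k\<close> by (intro exI[of _ "(x, y)"]) simp
      next
        assume "lt k y x" then show ?thesis using \<open>x \<in> L k\<close> \<open>y \<in> L k\<close> by (intro exI[of _ "(y, x)"]) simp
      qed
    qed auto
  qed
  obtain f where f0: "\<forall>k. k < n \<longrightarrow> fst (f k) \<in> L k \<and> snd (f k) \<in> L k \<and> lt k (fst (f k)) (snd (f k))"
    using choice[OF ex] by blast
  have f: "\<And>k. k < n \<Longrightarrow> fst (f k) \<in> L k \<and> snd (f k) \<in> L k \<and> lt k (fst (f k)) (snd (f k))"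
    using f0 by blast
  define c0 where "c0 = (\<lambda>k. fst (f k))"
  define d0 where "d0 = (\<lambda>k. snd (f k))"
  have s0: "std c0 d0" unfolding std_def c0_def d0_def using f by blast
  define \<sigma> where "\<sigma> = (\<lambda>k. if k < n then tf c0 d0 k else k)"
  have "bij_betw (tf c0 d0) {0..<n} {0..<n}"
    using tf_inj[OF s0] tf_img[OF s0] by (simp add: bij_betw_def)
  then have "bij_betw \<sigma> {0..<n} {0..<n}"
    by (rule bij_betw_cong[THEN iffD1, rotated]) (simp add: \<sigma>_def)
  then have perm: "\<sigma> permutes {0..<n}"
    by (rule bij_imp_permutes) (simp add: \<sigma>_def)
  have prp: "prec (\<sigma> i) a b" if i: "i < n" and a: "a \<in> C" and b: "b \<in> C" and ab: "lt i (a i) (b i)" for i a b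
  proof -
    define j where "j = \<sigma> i"
    have j: "j < n" "rv c0 d0 i j" using tf[OF s0 i] i unfolding j_def \<sigma>_def by auto
    have aL: "\<And>l. l < n \<Longrightarrow> a l \<in> L l" using a unfolding prod_carrier_def by auto
    have bL: "\<And>l. l < n \<Longrightarrow> b l \<in> L l" using b unfolding prod_carrier_def by auto
    have c0L: "\<And>l. l < n \<Longrightarrow> c0 l \<in> L l" and d0L: "\<And>l. l < n \<Longrightarrow> d0 l \<in> L l"
      and cd0: "\<And>l. l < n \<Longrightarrow> lt l (c0 l) (d0 l)" using s0 unfolding std_def by auto
    define c1 where "c1 = (\<lambda>l. if l = i then c0 i else mn l (c0 l) (b l))"
    define d1 where "d1 = (\<lambda>l. if l = i then d0 i else mx l (d0 l) (a l))"
    define c2 where "c2 = c1(i := mn i (c0 i) (a i))"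
    define d2 where "d2 = d1(i := mx i (d0 i) (b i))"
    define c3 where "c3 = c1(i := a i)"
    define d3 where "d3 = d1(i := b i)"
    have c1p: "c1 l \<in> L l \<and> le l (c1 l) (c0 l)" if l: "l < n" for l
      using mn[OF l c0L[OF l] bL[OF l]] c0L[OF l] unfolding c1_def le_def by (cases "l = i") simp_all
    have c1b: "le l (c1 l) (b l)" if l: "l < n" "l \<noteq> i" for l
      using mn[OF l(1) c0L[OF l(1)] bL[OF l(1)]] l(2) unfolding c1_def by simp
    have d1p: "d1 l \<in> L l \<and> le l (d0 l) (d1 l)" if l: "l < n" for l
      using mx[OF l d0L[OF l] aL[OF l]] d0L[OF l] unfolding d1_def le_def by (cases "l = i") simp_all
    have d1a: "le l (a l) (d1 l)" if l: "l < n" "l \<noteq> i" for l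
      using mx[OF l(1) d0L[OF l(1)] aL[OF l(1)]] l(2) unfolding d1_def by simp
    have lt1: "\<And>l. l < n \<Longrightarrow> lt l (c1 l) (d1 l)"
    proof -
      fix l assume l: "l < n"
      have "lt l (c1 l) (d0 l)" using le_lt_trans[OF l] c1p[OF l] c0L[OF l] d0L[OF l] cd0[OF l] by blast
      then show "lt l (c1 l) (d1 l)" using lt_le_trans[OF l] c1p[OF l] d1p[OF l] d0L[OF l] by blast
    qed
    have s1: "std c1 d1" unfolding std_def using c1p d1p lt1 by blast
    have s3: "std c3 d3" unfolding std_def
    proof (intro allI impI)
      fix l assume l: "l < n"
      show "c3 l \<in> L l \<and> d3 l \<in> L l \<and> lt l (c3 l) (d3 l)"
        using c1p[OF l] d1p[OF l] lt1[OF l] ab aL[OF l] bL[OF l] unfolding c3_def d3_def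
        by (cases "l = i") simp_all
    qed
    have c2i: "c2 i \<in> L i \<and> le i (c2 i) (c0 i) \<and> le i (c2 i) (a i)"
      unfolding c2_def using mn[OF i c0L[OF i] aL[OF i]] by simp
    have d2i: "d2 i \<in> L i \<and> le i (d0 i) (d2 i) \<and> le i (b i) (d2 i)"
      unfolding d2_def using mx[OF i d0L[OF i] bL[OF i]] by simp
    have "lt i (c2 i) (d2 i)"
      using le_lt_trans[OF i] lt_le_trans[OF i] c2i d2i c0L[OF i] d0L[OF i] cd0[OF i] by meson
    then have s2: "std c2 d2" unfolding std_def
    proof (intro allI impI)
      fix l assume l: "l < n" and h: "lt i (c2 i) (d2 i)"
      show "c2 l \<in> L l \<and> d2 l \<in> L l \<and> lt l (c2 l) (d2 l)"
      proof (cases "l = i")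
        case True then show ?thesis using h c2i d2i by simp
      next
        case False then show ?thesis using c1p[OF l] d1p[OF l] lt1[OF l] unfolding c2_def d2_def by simp
      qed
    qed
    have r1: "rv c1 d1 i j"
    proof -
      have "ple (Bv c0 d0 i) (Bv c1 d1 i)" unfolding ple_def Bv_def using d1p by (auto simp: c1_def le_def)
      moreover have "ple (Av c1 d1 i) (Av c0 d0 i)" unfolding ple_def Av_def using c1p by (auto simp: d1_def le_def)
      ultimately show ?thesis using Comp[OF s0 s1 i j(1)] j(2) by blast
    qed
    have r2: "rv c2 d2 i j"
      using Widen[OF s1 s2 i j(1)] r1 c2i d2i by (simp add: c2_def d2_def c1_def d1_def le_def)
    have r3: "rv c3 d3 i j"
    proof -
      have "le i (c2 i) (c3 i)" "le i (d3 i) (d2 i)" using c2i d2i by (auto simp: c3_def d3_def)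
      then show ?thesis using Widen[OF s3 s2 i j(1)] r2 by (simp add: c2_def d2_def c3_def d3_def)
    qed
    have "ple a (Bv c3 d3 i)" unfolding ple_def Bv_def c3_def d3_def using d1a by (auto simp: le_def)
    moreover have "ple (Av c3 d3 i) b" unfolding ple_def Av_def c3_def d3_def using c1b by (auto simp: le_def)
    ultimately have "prec j a b" using chain[OF j(1) a Bv_C[OF s3] Av_C[OF s3] b] r3 unfolding rv_def by blast
    then show ?thesis unfolding j_def .
  qed
  show ?thesis using perm prp by blast
qed

end

theorem lemma6p3:
  fixes n :: nat
    and L :: "nat \<Rightarrow> 'a set"
    and lt :: "nat \<Rightarrow> 'a \<Rightarrow> 'a \<Rightarrow> bool"
    and prec :: "nat \<Rightarrow> (nat \<Rightarrow> 'a) \<Rightarrow> (nat \<Rightarrow> 'a) \<Rightarrow> bool"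
  assumes lin: "\<And>i. i < n \<Longrightarrow> strict_linear_on (L i) (lt i)"
    and two: "\<And>i. i < n \<Longrightarrow> \<exists>x\<in>L i. \<exists>y\<in>L i. x \<noteq> y"
    and prec_lin: "\<And>j. j < n \<Longrightarrow> strict_linear_on (prod_carrier n L) (prec j)"
    and realize: "\<And>a b. a \<in> prod_carrier n L \<Longrightarrow> b \<in> prod_carrier n L \<Longrightarrow>
                    prod_less n lt a b \<longleftrightarrow> (\<forall>j<n. prec j a b)"
  shows "\<exists>\<sigma>. \<sigma> permutes {0..<n} \<and>
           (\<forall>i<n. \<forall>a\<in>prod_carrier n L. \<forall>b\<in>prod_carrier n L.
              lt i (a i) (b i) \<longrightarrow> prec (\<sigma> i) a b)"
proof -
  interpret L63 n L lt prec using assms by unfold_locales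
  show ?thesis by (rule main)
qed

end
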